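(* Let $G$ be an msp-digraph. Then $\chi'_o(G)\le 7$.
   Context: An oriented $r$-arc-coloring of a digraph $G=(V,E)$ is a map $c:E\to\{1,\dots,r\}$ such that (i) $c((u,v))\ne c((v,w))$ for every two arcs $(u,v),(v,w)\in E$, and (ii) $c((u,v))\ne c((y,z))$ for all arcs $(u,v),(v,w),(x,y),(y,z)\in E$ with $c((v,w))=c((x,y))$. The oriented chromatic index $\chi'_o(G)$ is the smallest $r$ for which such a coloring exists. Minimal vertex series-parallel digraphs (msp-digraphs) are defined recursively: (i) a single vertex with no arcs is an msp-digraph; (ii) if $G_1=(V_1,E_1)$ and $G_2=(V_2,E_2)$ are vertex-disjoint msp-digraphs, $O_1$ is the set of vertices of outdegree $0$ in $G_1$ and $I_2$ the set of vertices of indegree $0$ in $G_2$, then the parallel composition $G_1\cup G_2=(V_1\cup V_2,E_1\cup E_2)$ and the series composition $G_1\times G_2=(V_1\cup V_2,E_1\cup E_2\cup(O_1\times I_2))$ are msp-digraphs. *)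

theory Defs
  imports Main
begin

definition sinks :: "'a set \<Rightarrow> ('a \<times> 'a) set \<Rightarrow> 'a set" where
  "sinks V E = {v \<in> V. \<not> (\<exists>w. (v, w) \<in> E)}"

definition sources :: "'a set \<Rightarrow> ('a \<times> 'a) set \<Rightarrow> 'a set" where
  "sources V E = {v \<in> V. \<not> (\<exists>u. (u, v) \<in> E)}"

inductive msp :: "'a set \<Rightarrow> ('a \<times> 'a) set \<Rightarrow> bool" where
  single: "msp {v} {}"
| parallel: "\<lbrakk>msp V1 E1; msp V2 E2; V1 \<inter> V2 = {}\<rbrakk> \<Longrightarrow> msp (V1 \<union> V2) (E1 \<union> E2)"
| series: "\<lbrakk>msp V1 E1; msp V2 E2; V1 \<inter> V2 = {}\<rbrakk> \<Longrightarrow>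
     msp (V1 \<union> V2) (E1 \<union> E2 \<union> (sinks V1 E1 \<times> sources V2 E2))"

definition oriented_arc_coloring :: "('a \<times> 'a) set \<Rightarrow> nat \<Rightarrow> (('a \<times> 'a) \<Rightarrow> nat) \<Rightarrow> bool" where
  "oriented_arc_coloring E r c \<longleftrightarrow>
     (\<forall>e\<in>E. c e \<in> {1..r}) \<and>
     (\<forall>u v w. (u, v) \<in> E \<longrightarrow> (v, w) \<in> E \<longrightarrow> c (u, v) \<noteq> c (v, w)) \<and>
     (\<forall>u v w x y z. (u, v) \<in> E \<longrightarrow> (v, w) \<in> E \<longrightarrow> (x, y) \<in> E \<longrightarrow> (y, z) \<in> E \<longrightarrow>
        c (v, w) = c (x, y) \<longrightarrow> c (u, v) \<noteq> c (y, z))"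

definition oriented_chromatic_index :: "('a \<times> 'a) set \<Rightarrow> nat" where
  "oriented_chromatic_index E = (LEAST r. \<exists>c. oriented_arc_coloring E r c)"

end

theory Submission
  imports Defs
begin

definition Tr :: "nat \<Rightarrow> nat \<Rightarrow> bool" where
  "Tr i j \<longleftrightarrow> (j + 7 - i) mod 7 \<in> {1,2,4}"

lemma lt7: "(i::nat) < 7 \<Longrightarrow> i = 0 \<or> i = 1 \<or> i = 2 \<or> i = 3 \<or> i = 4 \<or> i = 5 \<or> i = 6"
  by arith

lemma Tr_props: "i < 7 \<Longrightarrow> j < 7 \<Longrightarrow> Tr i j \<Longrightarrow> i \<noteq> j \<and> \<not> Tr j i"
  unfolding Tr_def using lt7[of i] lt7[of j] by auto

definition Cl where
  "Cl A B A1 B1 A2 B2 x y z w \<longleftrightarrow> B1 \<subseteq> B \<and> A2 \<subseteq> A \<and> x < (7::nat) \<and> y < 7 \<and> z < 7 \<and> w < 7 \<and>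
    (\<forall>a\<in>A1. Tr a x) \<and> (\<forall>b\<in>B2. Tr x b) \<and> y \<in> A \<and> (\<forall>a\<in>A1. Tr a y) \<and>
    z \<in> B \<and> (\<forall>b\<in>B2. Tr z b) \<and> w \<in> A \<and> w \<in> B"


lemma msp_basic: "msp V E \<Longrightarrow> E \<subseteq> V \<times> V \<and> sources V E \<noteq> {} \<and> sinks V E \<noteq> {}"
proof (induction rule: msp.induct)
  case (single v)
  then show ?case by (auto simp: sources_def sinks_def)
next
  case (parallel V1 E1 V2 E2)
  then obtain s k where s: "s \<in> sources V1 E1" and k: "k \<in> sinks V1 E1" by blast
  have "s \<in> sources (V1 \<union> V2) (E1 \<union> E2)" using s parallel by (auto simp: sources_def)
  moreover have "k \<in> sinks (V1 \<union> V2) (E1 \<union> E2)" using k parallel by (auto simp: sinks_def)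
  ultimately show ?case using parallel by blast
next
  case (series V1 E1 V2 E2)
  then obtain s k where s: "s \<in> sources V1 E1" and k: "k \<in> sinks V2 E2" by blast
  have "s \<in> sources (V1 \<union> V2) (E1 \<union> E2 \<union> (sinks V1 E1 \<times> sources V2 E2))"
    using s series by (auto simp: sources_def)
  moreover have "k \<in> sinks (V1 \<union> V2) (E1 \<union> E2 \<union> (sinks V1 E1 \<times> sources V2 E2))"
    using k series by (auto simp: sinks_def)
  moreover have "sinks V1 E1 \<times> sources V2 E2 \<subseteq> (V1 \<union> V2) \<times> (V1 \<union> V2)"
    by (auto simp: sinks_def sources_def)
  ultimately show ?case using series by blast
qed

definition good :: "'a set \<Rightarrow> ('a \<times> 'a) set \<Rightarrow> nat set \<Rightarrow> nat set \<Rightarrow> bool" where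
  "good V E A B \<longleftrightarrow> (\<exists>c. (\<forall>e\<in>E. c e < 7) \<and>
     (\<forall>u v w. (u,v) \<in> E \<longrightarrow> (v,w) \<in> E \<longrightarrow> Tr (c (u,v)) (c (v,w))) \<and>
     (\<forall>u v. (u,v) \<in> E \<longrightarrow> v \<in> sinks V E \<longrightarrow> c (u,v) \<in> A) \<and>
     (\<forall>u v. (u,v) \<in> E \<longrightarrow> u \<in> sources V E \<longrightarrow> c (u,v) \<in> B))"

lemma good_parallel:
  assumes g1: "good V1 E1 A B" and g2: "good V2 E2 A B"
    and s1: "E1 \<subseteq> V1 \<times> V1" and s2: "E2 \<subseteq> V2 \<times> V2" and d: "V1 \<inter> V2 = {}"
  shows "good (V1 \<union> V2) (E1 \<union> E2) A B"
proof -
  obtain c1 where c1: "\<forall>e\<in>E1. c1 e < 7"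
    "\<forall>u v w. (u,v) \<in> E1 \<longrightarrow> (v,w) \<in> E1 \<longrightarrow> Tr (c1 (u,v)) (c1 (v,w))"
    "\<forall>u v. (u,v) \<in> E1 \<longrightarrow> v \<in> sinks V1 E1 \<longrightarrow> c1 (u,v) \<in> A"
    "\<forall>u v. (u,v) \<in> E1 \<longrightarrow> u \<in> sources V1 E1 \<longrightarrow> c1 (u,v) \<in> B"
    using g1 unfolding good_def by blast
  obtain c2 where c2: "\<forall>e\<in>E2. c2 e < 7"
    "\<forall>u v w. (u,v) \<in> E2 \<longrightarrow> (v,w) \<in> E2 \<longrightarrow> Tr (c2 (u,v)) (c2 (v,w))"
    "\<forall>u v. (u,v) \<in> E2 \<longrightarrow> v \<in> sinks V2 E2 \<longrightarrow> c2 (u,v) \<in> A"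
    "\<forall>u v. (u,v) \<in> E2 \<longrightarrow> u \<in> sources V2 E2 \<longrightarrow> c2 (u,v) \<in> B"
    using g2 unfolding good_def by blast
  define c where "c e = (if e \<in> E1 then c1 e else c2 e)" for e
  have E1n2: "e \<in> E1 \<Longrightarrow> e \<notin> E2" for e using s1 s2 d by auto
  show ?thesis unfolding good_def
  proof (intro exI[of _ c] conjI allI impI)
    show "\<forall>e\<in>E1 \<union> E2. c e < 7" using c1 c2 by (auto simp: c_def)
  next
    fix u v w assume a: "(u,v) \<in> E1 \<union> E2" "(v,w) \<in> E1 \<union> E2"
    then show "Tr (c (u,v)) (c (v,w))"
    proof (cases "(u,v) \<in> E1")
      case True
      then have "v \<in> V1" using s1 by auto
      then have "(v,w) \<in> E1" using a s2 d by auto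
      then show ?thesis using True c1 by (simp add: c_def)
    next
      case False
      then have "(u,v) \<in> E2" using a by auto
      then have "v \<in> V2" using s2 by auto
      then have "(v,w) \<in> E2" using a s1 d by auto
      then have "(v,w) \<notin> E1" using E1n2 by blast
      then show ?thesis using False \<open>(u,v) \<in> E2\<close> \<open>(v,w) \<in> E2\<close> c2 by (simp add: c_def)
    qed
  next
    fix u v assume a: "(u,v) \<in> E1 \<union> E2" "v \<in> sinks (V1 \<union> V2) (E1 \<union> E2)"
    show "c (u,v) \<in> A"
    proof (cases "(u,v) \<in> E1")
      case True
      then have "v \<in> sinks V1 E1" using a s1 by (auto simp: sinks_def)
      then show ?thesis using True c1 by (simp add: c_def)
    next
      case False
      then have "(u,v) \<in> E2" using a by auto
      then have "v \<in> sinks V2 E2" using a s2 by (auto simp: sinks_def)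
      then show ?thesis using False \<open>(u,v) \<in> E2\<close> c2 by (simp add: c_def)
    qed
  next
    fix u v assume a: "(u,v) \<in> E1 \<union> E2" "u \<in> sources (V1 \<union> V2) (E1 \<union> E2)"
    show "c (u,v) \<in> B"
    proof (cases "(u,v) \<in> E1")
      case True
      then have "u \<in> sources V1 E1" using a s1 by (auto simp: sources_def)
      then show ?thesis using True c1 by (simp add: c_def)
    next
      case False
      then have "(u,v) \<in> E2" using a by auto
      then have "u \<in> sources V2 E2" using a s2 by (auto simp: sources_def)
      then show ?thesis using False \<open>(u,v) \<in> E2\<close> c2 by (simp add: c_def)
    qed
  qed
qed

definition FamL :: "(nat list \<times> nat list) list" where
  "FamL = [([0,1,5],[0,2,6]), ([0,1,5],[1,2,4]), ([0,1,5],[2,3,5]), ([0,2,3],[0,4,5]), ([0,2,3],[1,2,4]), ([0,2,3],[3,4,6]), ([0,4,6],[0,1,3]), ([0,4,6],[1,2,4]), ([0,4,6],[1,5,6]), ([1,2,6],[0,1,3]), ([1,2,6],[2,3,5]), ([1,2,6],[3,4,6]), ([1,3,4],[0,4,5]), ([1,3,4],[1,5,6]), ([1,3,4],[2,3,5]), ([2,4,5],[0,2,6]), ([2,4,5],[1,5,6]), ([2,4,5],[3,4,6]), ([3,5,6],[0,1,3]), ([3,5,6],[0,2,6]), ([3,5,6],[0,4,5])]"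

lemma closure:
  assumes "(a,b) \<in> set FamL"
  shows "\<exists>a1 b1 a2 b2 x y z w. (a1,b1) \<in> set FamL \<and> (a2,b2) \<in> set FamL \<and> Cl (set a) (set b) (set a1) (set b1) (set a2) (set b2) x y z w"
proof -
  have "(a = [0,1,5] \<and> b = [0,2,6]) \<or> (a = [0,1,5] \<and> b = [1,2,4]) \<or> (a = [0,1,5] \<and> b = [2,3,5]) \<or> (a = [0,2,3] \<and> b = [0,4,5]) \<or> (a = [0,2,3] \<and> b = [1,2,4]) \<or> (a = [0,2,3] \<and> b = [3,4,6]) \<or> (a = [0,4,6] \<and> b = [0,1,3]) \<or> (a = [0,4,6] \<and> b = [1,2,4]) \<or> (a = [0,4,6] \<and> b = [1,5,6]) \<or> (a = [1,2,6] \<and> b = [0,1,3]) \<or> (a = [1,2,6] \<and> b = [2,3,5]) \<or> (a = [1,2,6] \<and> b = [3,4,6]) \<or> (a = [1,3,4] \<and> b = [0,4,5]) \<or> (a = [1,3,4] \<and> b = [1,5,6]) \<or> (a = [1,3,4] \<and> b = [2,3,5]) \<or> (a = [2,4,5] \<and> b = [0,2,6]) \<or> (a = [2,4,5] \<and> b = [1,5,6]) \<or> (a = [2,4,5] \<and> b = [3,4,6]) \<or> (a = [3,5,6] \<and> b = [0,1,3]) \<or> (a = [3,5,6] \<and> b = [0,2,6]) \<or> (a = [3,5,6] \<and> b = [0,4,5])" using assms by (simp add: FamL_def)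
  then show ?thesis
  proof (elim disjE)
    assume h: "a = [0,1,5] \<and> b = [0,2,6]"
    have "([3,5,6],[0,2,6]) \<in> set FamL \<and> ([0,1,5],[1,2,4]) \<in> set FamL \<and> Cl (set [0,1,5]) (set [0,2,6]) (set [3,5,6]) (set [0,2,6]) (set [0,1,5]) (set [1,2,4]) 0 0 0 0" by (simp add: Cl_def FamL_def Tr_def)
    then show ?thesis using h by blast
  next
    assume h: "a = [0,1,5] \<and> b = [1,2,4]"
    have "([0,4,6],[1,2,4]) \<in> set FamL \<and> ([0,1,5],[2,3,5]) \<in> set FamL \<and> Cl (set [0,1,5]) (set [1,2,4]) (set [0,4,6]) (set [1,2,4]) (set [0,1,5]) (set [2,3,5]) 1 1 1 1" by (simp add: Cl_def FamL_def Tr_def)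
    then show ?thesis using h by blast
  next
    assume h: "a = [0,1,5] \<and> b = [2,3,5]"
    have "([1,3,4],[2,3,5]) \<in> set FamL \<and> ([0,1,5],[0,2,6]) \<in> set FamL \<and> Cl (set [0,1,5]) (set [2,3,5]) (set [1,3,4]) (set [2,3,5]) (set [0,1,5]) (set [0,2,6]) 5 5 5 5" by (simp add: Cl_def FamL_def Tr_def)
    then show ?thesis using h by blast
  next
    assume h: "a = [0,2,3] \<and> b = [0,4,5]"
    have "([3,5,6],[0,4,5]) \<in> set FamL \<and> ([0,2,3],[1,2,4]) \<in> set FamL \<and> Cl (set [0,2,3]) (set [0,4,5]) (set [3,5,6]) (set [0,4,5]) (set [0,2,3]) (set [1,2,4]) 0 0 0 0" by (simp add: Cl_def FamL_def Tr_def)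
    then show ?thesis using h by blast
  next
    assume h: "a = [0,2,3] \<and> b = [1,2,4]"
    have "([0,1,5],[1,2,4]) \<in> set FamL \<and> ([0,2,3],[3,4,6]) \<in> set FamL \<and> Cl (set [0,2,3]) (set [1,2,4]) (set [0,1,5]) (set [1,2,4]) (set [0,2,3]) (set [3,4,6]) 2 2 2 2" by (simp add: Cl_def FamL_def Tr_def)
    then show ?thesis using h by blast
  next
    assume h: "a = [0,2,3] \<and> b = [3,4,6]"
    have "([1,2,6],[3,4,6]) \<in> set FamL \<and> ([0,2,3],[0,4,5]) \<in> set FamL \<and> Cl (set [0,2,3]) (set [3,4,6]) (set [1,2,6]) (set [3,4,6]) (set [0,2,3]) (set [0,4,5]) 3 3 3 3" by (simp add: Cl_def FamL_def Tr_def)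
    then show ?thesis using h by blast
  next
    assume h: "a = [0,4,6] \<and> b = [0,1,3]"
    have "([3,5,6],[0,1,3]) \<in> set FamL \<and> ([0,4,6],[1,2,4]) \<in> set FamL \<and> Cl (set [0,4,6]) (set [0,1,3]) (set [3,5,6]) (set [0,1,3]) (set [0,4,6]) (set [1,2,4]) 0 0 0 0" by (simp add: Cl_def FamL_def Tr_def)
    then show ?thesis using h by blast
  next
    assume h: "a = [0,4,6] \<and> b = [1,2,4]"
    have "([0,2,3],[1,2,4]) \<in> set FamL \<and> ([0,4,6],[1,5,6]) \<in> set FamL \<and> Cl (set [0,4,6]) (set [1,2,4]) (set [0,2,3]) (set [1,2,4]) (set [0,4,6]) (set [1,5,6]) 4 4 4 4" by (simp add: Cl_def FamL_def Tr_def)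
    then show ?thesis using h by blast
  next
    assume h: "a = [0,4,6] \<and> b = [1,5,6]"
    have "([2,4,5],[1,5,6]) \<in> set FamL \<and> ([0,4,6],[0,1,3]) \<in> set FamL \<and> Cl (set [0,4,6]) (set [1,5,6]) (set [2,4,5]) (set [1,5,6]) (set [0,4,6]) (set [0,1,3]) 6 6 6 6" by (simp add: Cl_def FamL_def Tr_def)
    then show ?thesis using h by blast
  next
    assume h: "a = [1,2,6] \<and> b = [0,1,3]"
    have "([0,4,6],[0,1,3]) \<in> set FamL \<and> ([1,2,6],[2,3,5]) \<in> set FamL \<and> Cl (set [1,2,6]) (set [0,1,3]) (set [0,4,6]) (set [0,1,3]) (set [1,2,6]) (set [2,3,5]) 1 1 1 1" by (simp add: Cl_def FamL_def Tr_def)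
    then show ?thesis using h by blast
  next
    assume h: "a = [1,2,6] \<and> b = [2,3,5]"
    have "([0,1,5],[2,3,5]) \<in> set FamL \<and> ([1,2,6],[3,4,6]) \<in> set FamL \<and> Cl (set [1,2,6]) (set [2,3,5]) (set [0,1,5]) (set [2,3,5]) (set [1,2,6]) (set [3,4,6]) 2 2 2 2" by (simp add: Cl_def FamL_def Tr_def)
    then show ?thesis using h by blast
  next
    assume h: "a = [1,2,6] \<and> b = [3,4,6]"
    have "([2,4,5],[3,4,6]) \<in> set FamL \<and> ([1,2,6],[0,1,3]) \<in> set FamL \<and> Cl (set [1,2,6]) (set [3,4,6]) (set [2,4,5]) (set [3,4,6]) (set [1,2,6]) (set [0,1,3]) 6 6 6 6" by (simp add: Cl_def FamL_def Tr_def)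
    then show ?thesis using h by blast
  next
    assume h: "a = [1,3,4] \<and> b = [0,4,5]"
    have "([0,2,3],[0,4,5]) \<in> set FamL \<and> ([1,3,4],[1,5,6]) \<in> set FamL \<and> Cl (set [1,3,4]) (set [0,4,5]) (set [0,2,3]) (set [0,4,5]) (set [1,3,4]) (set [1,5,6]) 4 4 4 4" by (simp add: Cl_def FamL_def Tr_def)
    then show ?thesis using h by blast
  next
    assume h: "a = [1,3,4] \<and> b = [1,5,6]"
    have "([0,4,6],[1,5,6]) \<in> set FamL \<and> ([1,3,4],[2,3,5]) \<in> set FamL \<and> Cl (set [1,3,4]) (set [1,5,6]) (set [0,4,6]) (set [1,5,6]) (set [1,3,4]) (set [2,3,5]) 1 1 1 1" by (simp add: Cl_def FamL_def Tr_def)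
    then show ?thesis using h by blast
  next
    assume h: "a = [1,3,4] \<and> b = [2,3,5]"
    have "([1,2,6],[2,3,5]) \<in> set FamL \<and> ([1,3,4],[0,4,5]) \<in> set FamL \<and> Cl (set [1,3,4]) (set [2,3,5]) (set [1,2,6]) (set [2,3,5]) (set [1,3,4]) (set [0,4,5]) 3 3 3 3" by (simp add: Cl_def FamL_def Tr_def)
    then show ?thesis using h by blast
  next
    assume h: "a = [2,4,5] \<and> b = [0,2,6]"
    have "([0,1,5],[0,2,6]) \<in> set FamL \<and> ([2,4,5],[3,4,6]) \<in> set FamL \<and> Cl (set [2,4,5]) (set [0,2,6]) (set [0,1,5]) (set [0,2,6]) (set [2,4,5]) (set [3,4,6]) 2 2 2 2" by (simp add: Cl_def FamL_def Tr_def)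
    then show ?thesis using h by blast
  next
    assume h: "a = [2,4,5] \<and> b = [1,5,6]"
    have "([1,3,4],[1,5,6]) \<in> set FamL \<and> ([2,4,5],[0,2,6]) \<in> set FamL \<and> Cl (set [2,4,5]) (set [1,5,6]) (set [1,3,4]) (set [1,5,6]) (set [2,4,5]) (set [0,2,6]) 5 5 5 5" by (simp add: Cl_def FamL_def Tr_def)
    then show ?thesis using h by blast
  next
    assume h: "a = [2,4,5] \<and> b = [3,4,6]"
    have "([0,2,3],[3,4,6]) \<in> set FamL \<and> ([2,4,5],[1,5,6]) \<in> set FamL \<and> Cl (set [2,4,5]) (set [3,4,6]) (set [0,2,3]) (set [3,4,6]) (set [2,4,5]) (set [1,5,6]) 4 4 4 4" by (simp add: Cl_def FamL_def Tr_def)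
    then show ?thesis using h by blast
  next
    assume h: "a = [3,5,6] \<and> b = [0,1,3]"
    have "([1,2,6],[0,1,3]) \<in> set FamL \<and> ([3,5,6],[0,4,5]) \<in> set FamL \<and> Cl (set [3,5,6]) (set [0,1,3]) (set [1,2,6]) (set [0,1,3]) (set [3,5,6]) (set [0,4,5]) 3 3 3 3" by (simp add: Cl_def FamL_def Tr_def)
    then show ?thesis using h by blast
  next
    assume h: "a = [3,5,6] \<and> b = [0,2,6]"
    have "([2,4,5],[0,2,6]) \<in> set FamL \<and> ([3,5,6],[0,1,3]) \<in> set FamL \<and> Cl (set [3,5,6]) (set [0,2,6]) (set [2,4,5]) (set [0,2,6]) (set [3,5,6]) (set [0,1,3]) 6 6 6 6" by (simp add: Cl_def FamL_def Tr_def)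
    then show ?thesis using h by blast
  next
    assume h: "a = [3,5,6] \<and> b = [0,4,5]"
    have "([1,3,4],[0,4,5]) \<in> set FamL \<and> ([3,5,6],[0,2,6]) \<in> set FamL \<and> Cl (set [3,5,6]) (set [0,4,5]) (set [1,3,4]) (set [0,4,5]) (set [3,5,6]) (set [0,2,6]) 5 5 5 5" by (simp add: Cl_def FamL_def Tr_def)
    then show ?thesis using h by blast
  qed
qed

lemma good_series:
  assumes g1: "good V1 E1 A1 B1" and g2: "good V2 E2 A2 B2"
    and s1: "E1 \<subseteq> V1 \<times> V1" and s2: "E2 \<subseteq> V2 \<times> V2" and d: "V1 \<inter> V2 = {}"
    and ne1: "sinks V1 E1 \<noteq> {}" and ne2: "sources V2 E2 \<noteq> {}"
    and cl: "Cl A B A1 B1 A2 B2 x y z w"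
  shows "good (V1 \<union> V2) (E1 \<union> E2 \<union> (sinks V1 E1 \<times> sources V2 E2)) A B"
proof -
  obtain c1 where c1: "\<forall>e\<in>E1. c1 e < 7"
    "\<forall>u v w. (u,v) \<in> E1 \<longrightarrow> (v,w) \<in> E1 \<longrightarrow> Tr (c1 (u,v)) (c1 (v,w))"
    "\<forall>u v. (u,v) \<in> E1 \<longrightarrow> v \<in> sinks V1 E1 \<longrightarrow> c1 (u,v) \<in> A1"
    "\<forall>u v. (u,v) \<in> E1 \<longrightarrow> u \<in> sources V1 E1 \<longrightarrow> c1 (u,v) \<in> B1"
    using g1 unfolding good_def by blast
  obtain c2 where c2: "\<forall>e\<in>E2. c2 e < 7"
    "\<forall>u v w. (u,v) \<in> E2 \<longrightarrow> (v,w) \<in> E2 \<longrightarrow> Tr (c2 (u,v)) (c2 (v,w))"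
    "\<forall>u v. (u,v) \<in> E2 \<longrightarrow> v \<in> sinks V2 E2 \<longrightarrow> c2 (u,v) \<in> A2"
    "\<forall>u v. (u,v) \<in> E2 \<longrightarrow> u \<in> sources V2 E2 \<longrightarrow> c2 (u,v) \<in> B2"
    using g2 unfolding good_def by blast
  note C = cl[unfolded Cl_def]
  define N where "N = sinks V1 E1 \<times> sources V2 E2"
  define E where "E = E1 \<union> E2 \<union> N"
  define c where "c e = (if e \<in> E1 then c1 e else if e \<in> E2 then c2 e else
      (if fst e \<in> sources V1 E1 then (if snd e \<in> sinks V2 E2 then w else z)
       else (if snd e \<in> sinks V2 E2 then y else x)))" for e
  have N12: "e \<in> N \<Longrightarrow> e \<notin> E1 \<and> e \<notin> E2" for e
    using s1 s2 d unfolding N_def sinks_def sources_def by auto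
  have E1n2: "e \<in> E1 \<Longrightarrow> e \<notin> E2" for e using s1 s2 d by auto
  have cN: "(s,t) \<in> N \<Longrightarrow> c (s,t) = (if s \<in> sources V1 E1 then (if t \<in> sinks V2 E2 then w else z)
       else (if t \<in> sinks V2 E2 then y else x))" for s t
    using N12[of "(s,t)"] by (simp add: c_def)
  have cE1: "e \<in> E1 \<Longrightarrow> c e = c1 e" for e by (simp add: c_def)
  have cE2: "e \<in> E2 \<Longrightarrow> c e = c2 e" for e using E1n2[of e] by (auto simp: c_def)
  have V1: "(u,v) \<in> E1 \<Longrightarrow> u \<in> V1 \<and> v \<in> V1" for u v using s1 by auto
  have V2: "(u,v) \<in> E2 \<Longrightarrow> u \<in> V2 \<and> v \<in> V2" for u v using s2 by auto
  have VN: "(u,v) \<in> N \<Longrightarrow> u \<in> V1 \<and> v \<in> V2" for u v unfolding N_def sinks_def sources_def by auto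
  have "\<forall>e\<in>E. c e < 7"
  proof
    fix e assume "e \<in> E"
    then show "c e < 7" using c1 c2 C cE1 cE2 N12 by (cases e) (auto simp: E_def c_def)
  qed
  moreover have "\<forall>u v w. (u,v) \<in> E \<longrightarrow> (v,w) \<in> E \<longrightarrow> Tr (c (u,v)) (c (v,w))"
  proof (intro allI impI)
    fix u v w' assume a: "(u,v) \<in> E" "(v,w') \<in> E"
    show "Tr (c (u,v)) (c (v,w'))"
    proof (cases "(u,v) \<in> E1")
      case True
      then have v1: "v \<in> V1" using V1 by blast
      show ?thesis
      proof (cases "(v,w') \<in> E1")
        case True then show ?thesis using \<open>(u,v) \<in> E1\<close> c1 cE1 by simp
      next
        case False
        then have "(v,w') \<in> N" using a v1 V2 d unfolding E_def by blast
        then have vs: "v \<in> sinks V1 E1" and wt: "w' \<in> sources V2 E2" unfolding N_def by auto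
        have "v \<notin> sources V1 E1" using \<open>(u,v) \<in> E1\<close> by (auto simp: sources_def)
        then have "c (v,w') = x \<or> c (v,w') = y" using cN[OF \<open>(v,w') \<in> N\<close>] by auto
        moreover have "c1 (u,v) \<in> A1" using c1 True vs by blast
        ultimately show ?thesis using C cE1[OF True] by auto
      qed
    next
      case False
      show ?thesis
      proof (cases "(u,v) \<in> E2")
        case True
        then have v2: "v \<in> V2" using V2 by blast
        then have "(v,w') \<in> E2" using a V1 VN d unfolding E_def by blast
        then show ?thesis using True c2 cE2 by simp
      next
        case False
        then have uvN: "(u,v) \<in> N" using a \<open>(u,v) \<notin> E1\<close> unfolding E_def by blast
        then have v2: "v \<in> V2" and vt: "v \<in> sources V2 E2" using VN unfolding N_def by auto
        then have vwE2: "(v,w') \<in> E2" using a V1 VN d unfolding E_def by blast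
        then have "v \<notin> sinks V2 E2" by (auto simp: sinks_def)
        then have "c (u,v) = x \<or> c (u,v) = z" using cN[OF uvN] by auto
        moreover have "c2 (v,w') \<in> B2" using c2 vwE2 vt by blast
        ultimately show ?thesis using C cE2[OF vwE2] by auto
      qed
    qed
  qed
  moreover have "\<forall>u v. (u,v) \<in> E \<longrightarrow> v \<in> sinks (V1 \<union> V2) E \<longrightarrow> c (u,v) \<in> A"
  proof (intro allI impI)
    fix u v assume a: "(u,v) \<in> E" "v \<in> sinks (V1 \<union> V2) E"
    have noout: "(v,t) \<notin> E" for t using a(2) by (auto simp: sinks_def)
    show "c (u,v) \<in> A"
    proof (cases "(u,v) \<in> E1")
      case True
      then have "v \<in> V1" using V1 by blast
      then have "v \<in> sinks V1 E1" using noout unfolding E_def sinks_def by blast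
      moreover obtain t where "t \<in> sources V2 E2" using ne2 by blast
      ultimately have "(v,t) \<in> E" unfolding E_def N_def by blast
      then show ?thesis using noout by blast
    next
      case False
      show ?thesis
      proof (cases "(u,v) \<in> E2")
        case True
        then have "v \<in> sinks V2 E2" using V2 noout unfolding E_def sinks_def by blast
        then show ?thesis using c2 True cE2[OF True] C by auto
      next
        case False
        then have uvN: "(u,v) \<in> N" using a \<open>(u,v) \<notin> E1\<close> unfolding E_def by blast
        then have "v \<in> V2" using VN by blast
        then have "v \<in> sinks V2 E2" using noout unfolding E_def sinks_def by blast
        then have "c (u,v) = y \<or> c (u,v) = w" using cN[OF uvN] by auto
        then show ?thesis using C by auto
      qed
    qed
  qed
  moreover have "\<forall>u v. (u,v) \<in> E \<longrightarrow> u \<in> sources (V1 \<union> V2) E \<longrightarrow> c (u,v) \<in> B"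
  proof (intro allI impI)
    fix u v assume a: "(u,v) \<in> E" "u \<in> sources (V1 \<union> V2) E"
    have noin: "(t,u) \<notin> E" for t using a(2) by (auto simp: sources_def)
    show "c (u,v) \<in> B"
    proof (cases "(u,v) \<in> E1")
      case True
      then have "u \<in> sources V1 E1" using V1 noin unfolding E_def sources_def by blast
      then show ?thesis using c1 True cE1[OF True] C by auto
    next
      case False
      show ?thesis
      proof (cases "(u,v) \<in> E2")
        case True
        then have "u \<in> V2" using V2 by blast
        then have "u \<in> sources V2 E2" using noin unfolding E_def sources_def by blast
        moreover obtain t where "t \<in> sinks V1 E1" using ne1 by blast
        ultimately have "(t,u) \<in> E" unfolding E_def N_def by blast
        then show ?thesis using noin by blast
      next
        case False
        then have uvN: "(u,v) \<in> N" using a \<open>(u,v) \<notin> E1\<close> unfolding E_def by blast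
        then have "u \<in> V1" using VN by blast
        then have "u \<in> sources V1 E1" using noin unfolding E_def sources_def by blast
        then have "c (u,v) = z \<or> c (u,v) = w" using cN[OF uvN] by auto
        then show ?thesis using C by auto
      qed
    qed
  qed
  ultimately show ?thesis unfolding good_def E_def N_def by blast
qed

lemma msp_good: "msp V E \<Longrightarrow> (a,b) \<in> set FamL \<Longrightarrow> good V E (set a) (set b)"
proof (induction arbitrary: a b rule: msp.induct)
  case (single v)
  then show ?case unfolding good_def by auto
next
  case (parallel V1 E1 V2 E2)
  then show ?case using good_parallel msp_basic by blast
next
  case (series V1 E1 V2 E2)
  obtain a1 b1 a2 b2 x y z w where "(a1,b1) \<in> set FamL" "(a2,b2) \<in> set FamL"
    "Cl (set a) (set b) (set a1) (set b1) (set a2) (set b2) x y z w"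
    using closure[OF series.prems] by blast
  then show ?case using good_series series.IH series.hyps msp_basic by metis
qed

theorem mainTheorem8:
  fixes V :: "'a set" and E :: "('a \<times> 'a) set"
  assumes "msp V E"
  shows "oriented_chromatic_index E \<le> 7"
proof -
  have "([0,1,5],[0,2,6]) \<in> set FamL" by (simp add: FamL_def)
  from msp_good[OF assms this] obtain c where c: "\<forall>e\<in>E. c e < 7"
     "\<forall>u v w. (u,v) \<in> E \<longrightarrow> (v,w) \<in> E \<longrightarrow> Tr (c (u,v)) (c (v,w))"
    unfolding good_def by blast
  have "oriented_arc_coloring E 7 (\<lambda>e. c e + 1)"
    unfolding oriented_arc_coloring_def
  proof (intro conjI allI impI)
    show "\<forall>e\<in>E. c e + 1 \<in> {1..7}" using c(1) by auto
  next
    fix u v w assume "(u,v) \<in> E" "(v,w) \<in> E"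
    then show "c (u,v) + 1 \<noteq> c (v,w) + 1" using c Tr_props by fastforce
  next
    fix u v w x y z assume h: "(u,v) \<in> E" "(v,w) \<in> E" "(x,y) \<in> E" "(y,z) \<in> E"
      "c (v,w) + 1 = c (x,y) + 1"
    have t1: "Tr (c (u,v)) (c (v,w))" using c h by blast
    have t2: "Tr (c (x,y)) (c (y,z))" using c h by blast
    show "c (u,v) + 1 \<noteq> c (y,z) + 1"
    proof
      assume "c (u,v) + 1 = c (y,z) + 1"
      then have "Tr (c (v,w)) (c (u,v))" using t2 h(5) by simp
      then show False using t1 Tr_props c h by blast
    qed
  qed
  then show ?thesis unfolding oriented_chromatic_index_def by (auto intro: Least_le)
qed

end
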